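(* Under the setting where $N,B$ are positive integers with $B\mid N$, $\lambda>0$, and for an assignment vector $\bar N=(N_1,\dots,N_B)$ of positive integers with $\sum_i N_i=N$ one sets $T(\bar N)=\max(T_1,\dots,T_B)$ with independent $T_i\sim\mathrm{Exp}(N_i\lambda)$, the minimum of $\mathbb{E}[T(\bar N)]$ over all such assignments equals $$\frac{B}{N\lambda} H_B,$$ where $H_B = \sum_{k=1}^B \frac1k$ is the $B$-th harmonic number; it is attained by the balanced assignment $(N/B,\dots,N/B)$.
   Context: Interpretation: $B$ disjoint data batches replicated over $N$ workers with i.i.d. $\mathrm{Exp}(\lambda)$ service times; $T(\bar N)$ is the time at which every batch has been computed by at least one of its hosting workers. *)

theory Defs
  imports "HOL-Probability.Probability"
begin

definition assignments :: "nat \<Rightarrow> nat \<Rightarrow> (nat \<Rightarrow> nat) set" where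
  "assignments N B = {Nv. (\<forall>i<B. 0 < Nv i) \<and> (\<forall>i\<ge>B. Nv i = 0) \<and> (\<Sum>i<B. Nv i) = N}"

definition service_law :: "real \<Rightarrow> nat \<Rightarrow> (nat \<Rightarrow> nat) \<Rightarrow> (nat \<Rightarrow> real) measure" where
  "service_law lam B Nv = PiM {..<B} (\<lambda>i. density lborel (exponential_density (real (Nv i) * lam)))"

definition expected_T :: "real \<Rightarrow> nat \<Rightarrow> (nat \<Rightarrow> nat) \<Rightarrow> real" where
  "expected_T lam B Nv = (\<integral>t. Max ((\<lambda>i. t i) ` {..<B}) \<partial>service_law lam B Nv)"

end

theory Submission
  imports Defs "HOL-Real_Asymp.Real_Asymp"
begin


lemma prod_le_mean_pow:
  fixes I :: "'a set" and r :: "'a \<Rightarrow> real" and t :: real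
  assumes fin: "finite I" and ne: "I \<noteq> {}" and rpos: "\<And>i. i \<in> I \<Longrightarrow> 0 < r i" and t: "0 \<le> t"
  shows "(\<Prod>i\<in>I. 1 - exp (- (r i * t))) \<le> (1 - exp (- ((\<Sum>i\<in>I. r i) / card I * t))) ^ card I"
proof (cases "t = 0")
  case True
  have "card I > 0" using fin ne by (simp add: card_gt_0_iff)
  then show ?thesis using True ne fin by (simp add: prod_zero)
next
  case False
  hence tp: "t > 0" using t by simp
  define n where "n = card I"
  have n0: "n > 0" using fin ne by (simp add: n_def card_gt_0_iff)
  define y where "y i = 1 - exp (- (r i * t))" for i
  have ypos: "0 < y i" "y i < 1" if "i \<in> I" for i
    using rpos[OF that] tp by (auto simp: y_def)
  define m where "m = (\<Sum>i\<in>I. (1 / real n) * y i)"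
  have w: "(\<Sum>i\<in>I. 1 / real n) = 1" using n0 by (simp add: n_def)
  have "(\<Sum>i\<in>I. (1/real n) * ln (y i)) \<le> ln (\<Sum>i\<in>I. (1/real n) *\<^sub>R y i)"
    by (rule concave_on_sum[OF fin ne ln_concave w]) (use ypos n0 in auto)
  hence l: "(\<Sum>i\<in>I. ln (y i)) \<le> real n * ln m"
    using n0 by (simp add: m_def sum_divide_distrib[symmetric] pos_divide_le_eq mult.commute)
  have mpos: "m > 0" unfolding m_def using ypos n0 ne fin
    by (intro sum_pos) auto
  have "(\<Prod>i\<in>I. y i) = exp (\<Sum>i\<in>I. ln (y i))"
    using ypos fin by (simp add: exp_sum)
  also have "\<dots> \<le> exp (real n * ln m)" using l by simp
  also have "\<dots> = m ^ n" using mpos by (simp add: exp_of_nat_mult)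
  finally have p1: "(\<Prod>i\<in>I. y i) \<le> m ^ n" .
  have "exp (\<Sum>i\<in>I. (1/real n) *\<^sub>R (- (r i * t))) \<le> (\<Sum>i\<in>I. (1/real n) * exp (- (r i * t)))"
    by (rule convex_on_sum[OF fin ne exp_convex w]) (use n0 in auto)
  moreover have "(\<Sum>i\<in>I. (1/real n) *\<^sub>R (- (r i * t))) = - ((\<Sum>i\<in>I. r i) / real n * t)"
    by (simp add: sum_negf sum_distrib_right sum_divide_distrib)
  ultimately have "exp (- ((\<Sum>i\<in>I. r i) / real n * t)) \<le> (\<Sum>i\<in>I. (1/real n) * exp (- (r i * t)))"
    by simp
  moreover have "m = 1 - (\<Sum>i\<in>I. (1/real n) * exp (- (r i * t)))"
    unfolding m_def y_def using w by (simp add: right_diff_distrib sum_subtractf)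
  ultimately have "m \<le> 1 - exp (- ((\<Sum>i\<in>I. r i) / real n * t))" by simp
  hence "m ^ n \<le> (1 - exp (- ((\<Sum>i\<in>I. r i) / real n * t))) ^ n"
    using mpos by (intro power_mono) auto
  with p1 show ?thesis by (simp add: y_def n_def)
qed

lemma one_minus_prod_le_sum:
  fixes x :: "'a \<Rightarrow> real"
  assumes "finite I" "\<And>i. i \<in> I \<Longrightarrow> 0 \<le> x i \<and> x i \<le> 1"
  shows "1 - (\<Prod>i\<in>I. 1 - x i) \<le> (\<Sum>i\<in>I. x i) \<and> 0 \<le> (\<Prod>i\<in>I. 1 - x i) \<and> (\<Prod>i\<in>I. 1 - x i) \<le> 1"
  using assms
proof (induction I rule: finite_induct)
  case (insert a F)
  hence IH: "1 - (\<Prod>i\<in>F. 1 - x i) \<le> (\<Sum>i\<in>F. x i)" "0 \<le> (\<Prod>i\<in>F. 1 - x i)" "(\<Prod>i\<in>F. 1 - x i) \<le> 1" by auto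
  have xa: "0 \<le> x a" "x a \<le> 1" using insert by auto
  have "1 - (1 - x a) * (\<Prod>i\<in>F. 1 - x i) = (1 - (\<Prod>i\<in>F. 1 - x i)) + x a * (\<Prod>i\<in>F. 1 - x i)"
    by (simp add: algebra_simps)
  also have "\<dots> \<le> (\<Sum>i\<in>F. x i) + x a"
    using IH xa mult_left_le[of "(\<Prod>i\<in>F. 1 - x i)" "x a"] by (smt (verit) mult_right_le_one_le)
  finally show ?case using insert IH xa by (simp add: mult_le_one add.commute)
qed simp



lemma nn_integral_bal:
  fixes r :: real and B :: nat
  assumes r: "0 < r"
  shows "(\<integral>\<^sup>+t\<in>{0..}. ennreal (1 - (1 - exp (- (r * t))) ^ B) \<partial>lborel) = ennreal (harm B / r)"
proof -
  define F where "F t = (\<Sum>k<B. (1 - exp (- (r * t))) ^ Suc k / (r * real (Suc k)))" for t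
  have "(\<integral>\<^sup>+t\<in>{0..}. ennreal (1 - (1 - exp (- (r * t))) ^ B) \<partial>lborel) = ennreal (harm B / r - F 0)"
  proof (rule nn_integral_FTC_atLeast)
    show "(\<lambda>t. 1 - (1 - exp (- (r * t))) ^ B) \<in> borel_measurable borel" by measurable
    fix t :: real assume t: "0 \<le> t"
    have e: "exp (- (r * t)) \<le> 1" using r t by simp
    show "0 \<le> 1 - (1 - exp (- (r * t))) ^ B"
      using e by (simp add: power_le_one)
    have d: "((\<lambda>t. (1 - exp (- (r * t))) ^ Suc k / (r * real (Suc k))) has_real_derivative
              exp (- (r * t)) * (1 - exp (- (r * t))) ^ k) (at t)" for k
    proof -
      have "((\<lambda>t. 1 - exp (- (r * t))) has_real_derivative r * exp (- (r * t))) (at t)"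
        by (auto intro!: derivative_eq_intros)
      from DERIV_power_Suc[OF this, of k]
      have "((\<lambda>t. (1 - exp (- (r * t))) ^ Suc k) has_real_derivative
              (1 + real k) * (r * exp (- (r * t)) * (1 - exp (- (r * t))) ^ k)) (at t)" by simp
      from DERIV_cdivide[OF this, of "r * real (Suc k)"] show ?thesis
      proof (rule DERIV_cong)
        have nz: "r + r * real k \<noteq> 0" using r by (smt (verit) mult_nonneg_nonneg of_nat_0_le_iff)
        show "(1 + real k) * (r * exp (- (r * t)) * (1 - exp (- (r * t))) ^ k) / (r * real (Suc k)) =
          exp (- (r * t)) * (1 - exp (- (r * t))) ^ k"
          using nz by (simp add: field_simps)
      qed
    qed
    have "(F has_real_derivative (\<Sum>k<B. exp (- (r * t)) * (1 - exp (- (r * t))) ^ k)) (at t)"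
      unfolding F_def by (intro DERIV_sum d)
    moreover have "(\<Sum>k<B. exp (- (r * t)) * (1 - exp (- (r * t))) ^ k) = 1 - (1 - exp (- (r * t))) ^ B"
      using one_diff_power_eq[of "1 - exp (- (r * t))" B] by (simp add: sum_distrib_left)
    ultimately show "(F has_real_derivative 1 - (1 - exp (- (r * t))) ^ B) (at t)" by simp
  next
    have "((\<lambda>t. (1 - exp (- (r * t))) ^ Suc k / (r * real (Suc k))) \<longlongrightarrow> 1 / (r * real (Suc k))) at_top" for k
    proof -
      have "((\<lambda>t. (1 - exp (- (r * t))) ^ Suc k) \<longlongrightarrow> 1) at_top" using r by real_asymp
      then show ?thesis using tendsto_divide[OF _ tendsto_const, of _ 1 at_top "r * real (Suc k)"] r by simp
    qed
    hence "(F \<longlongrightarrow> (\<Sum>k<B. 1 / (r * real (Suc k)))) at_top"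
      unfolding F_def by (intro tendsto_sum) auto
    moreover have "(\<Sum>k<B. 1 / (r * real (Suc k))) = harm B / r"
      by (simp add: harm_altdef sum_divide_distrib field_simps)
    ultimately show "(F \<longlongrightarrow> harm B / r) at_top" by simp
  qed
  moreover have "F 0 = 0" by (simp add: F_def)
  ultimately show ?thesis by simp
qed

lemma nn_integral_expo:
  fixes c l :: real
  assumes l: "0 < l" and c: "0 \<le> c"
  shows "(\<integral>\<^sup>+t\<in>{0..}. ennreal (c * exp (- (l * t))) \<partial>lborel) = ennreal (c / l)"
proof -
  have "(\<integral>\<^sup>+t\<in>{0..}. ennreal (c * exp (- (l * t))) \<partial>lborel) = ennreal (0 - (\<lambda>t. - (c * exp (- (l * t))) / l) 0)"
  proof (rule nn_integral_FTC_atLeast)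
    show "(\<lambda>t. c * exp (- (l * t))) \<in> borel_measurable borel" by measurable
    fix t :: real
    show "0 \<le> c * exp (- (l * t))" using c by simp
    show "((\<lambda>t. - (c * exp (- (l * t))) / l) has_real_derivative c * exp (- (l * t))) (at t)"
      using l by (auto intro!: derivative_eq_intros simp: field_simps)
  next
    show "((\<lambda>t. - (c * exp (- (l * t))) / l) \<longlongrightarrow> 0) at_top" using l by real_asymp
  qed
  then show ?thesis by simp
qed



lemma layer:
  fixes r :: "nat \<Rightarrow> real" and B :: nat
  assumes B: "0 < B" and r: "\<And>i. 0 < r i"
  shows "integral\<^sup>L (PiM {..<B} (\<lambda>i. density lborel (exponential_density (r i)))) (\<lambda>x. Max ((\<lambda>i. x i) ` {..<B}))
     = enn2real (\<integral>\<^sup>+t\<in>{0..}. ennreal (1 - (\<Prod>i<B. 1 - exp (- (r i * t)))) \<partial>lborel)"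
proof -
  define Mi where "Mi i = density lborel (exponential_density (r i))" for i
  define M where "M = PiM {..<B} Mi"
  define f where "f x = Max ((\<lambda>i. x i) ` {..<B})" for x :: "nat \<Rightarrow> real"
  have ps: "prob_space (Mi i)" for i unfolding Mi_def by (rule prob_space_exponential_density[OF r])
  interpret product_sigma_finite Mi
    by (intro product_sigma_finite.intro prob_space_imp_sigma_finite[OF ps])
  interpret P: prob_space M unfolding M_def by (rule prob_space_PiM[OF ps])
  have setsMi[simp]: "sets (Mi i) = sets borel" for i by (simp add: Mi_def)
  have spaceM: "space M = PiE {..<B} (\<lambda>_. UNIV)" by (simp add: M_def space_PiM Mi_def)
  have comp[measurable]: "(\<lambda>x. x i) \<in> borel_measurable M" if "i \<in> {..<B}" for i
  proof -
    have "(\<lambda>x. x i) \<in> measurable M (Mi i)" unfolding M_def by (rule measurable_component_singleton[OF that])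
    then show ?thesis by (subst measurable_cong_sets[of M M borel "Mi i"]) auto
  qed
  have fm[measurable]: "f \<in> borel_measurable M"
    unfolding f_def by (rule borel_measurable_Max) (auto intro: comp)
  have fin: "finite {..<B}" "{..<B} \<noteq> {}" using B by auto
  have le_iff: "f x \<le> t \<longleftrightarrow> (\<forall>i<B. x i \<le> t)" for x t
    unfolding f_def using fin by (subst Max_le_iff) auto
  have cdf: "emeasure M {x\<in>space M. f x \<le> t} = (\<Prod>i<B. ennreal (erlang_CDF 0 (r i) t))" for t
  proof -
    have "{x\<in>space M. f x \<le> t} = PiE {..<B} (\<lambda>_. {..t})"
      unfolding spaceM le_iff by (auto simp: PiE_def Pi_def)
    then have "emeasure M {x\<in>space M. f x \<le> t} = (\<Prod>i<B. emeasure (Mi i) {..t})"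
      unfolding M_def by (simp add: emeasure_PiM)
    also have "\<dots> = (\<Prod>i<B. ennreal (erlang_CDF 0 (r i) t))"
      unfolding Mi_def using r by (simp add: emeasure_erlang_density)
    finally show ?thesis .
  qed
  have AE0: "AE x in M. 0 \<le> f x"
  proof (rule AE_I[of _ _ "{x\<in>space M. f x \<le> 0}"])
    show "{x \<in> space M. \<not> 0 \<le> f x} \<subseteq> {x\<in>space M. f x \<le> 0}" by auto
    show "emeasure M {x\<in>space M. f x \<le> 0} = 0" using cdf[of 0] B
      by (simp add: erlang_CDF_0)
    show "{x\<in>space M. f x \<le> 0} \<in> sets M" by measurable
  qed
  have tail: "emeasure M {x\<in>space M. t < f x} = ennreal (1 - (\<Prod>i<B. 1 - exp (- (r i * t))))" if t: "0 \<le> t" for t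
  proof -
    have "{x\<in>space M. t < f x} = space M - {x\<in>space M. f x \<le> t}" by auto
    then have "emeasure M {x\<in>space M. t < f x} = 1 - emeasure M {x\<in>space M. f x \<le> t}"
      by (simp add: emeasure_compl P.emeasure_space_1)
    also have "\<dots> = 1 - ennreal (\<Prod>i<B. 1 - exp (- (r i * t)))"
    proof -
      have nn: "0 \<le> 1 - exp (- (r i * t))" for i using r[of i] t by simp
      have "(\<Prod>i<B. ennreal (erlang_CDF 0 (r i) t)) = (\<Prod>i<B. ennreal (1 - exp (- (r i * t))))"
        using t by (intro prod.cong) (auto simp: erlang_CDF_0 mult.commute)
      also have "\<dots> = ennreal (\<Prod>i<B. 1 - exp (- (r i * t)))" using nn by (rule prod_ennreal)
      finally show ?thesis unfolding cdf by simp
    qed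
    also have "\<dots> = ennreal (1 - (\<Prod>i<B. 1 - exp (- (r i * t))))"
    proof -
      have rt: "0 \<le> r i * t" for i using r[of i] t by simp
      have pn: "0 \<le> (\<Prod>i<B. 1 - exp (- (r i * t)))" by (rule prod_nonneg) (use rt in simp)
      from ennreal_minus[OF pn, of 1] show ?thesis by simp
    qed
    finally show ?thesis .
  qed
  interpret PS: pair_sigma_finite M lborel
    by (intro pair_sigma_finite.intro P.sigma_finite_measure_axioms lborel.sigma_finite_measure_axioms)
  have "(\<integral>\<^sup>+x. ennreal (f x) \<partial>M) = (\<integral>\<^sup>+x. (\<integral>\<^sup>+t. indicator {0..<f x} t \<partial>lborel) \<partial>M)"
  proof (rule nn_integral_cong)
    fix x show "ennreal (f x) = (\<integral>\<^sup>+t. indicator {0..<f x} t \<partial>lborel)"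
      by (cases "0 \<le> f x") (auto simp: ennreal_neg)
  qed
  also have "\<dots> = (\<integral>\<^sup>+t. (\<integral>\<^sup>+x. indicator {0..<f x} t \<partial>M) \<partial>lborel)"
  proof (rule PS.Fubini'[symmetric])
    have "(\<lambda>p. indicator {0..<f (fst p)} (snd p) :: ennreal) = (\<lambda>p. if 0 \<le> snd p \<and> snd p < f (fst p) then 1 else 0)"
      by (auto simp: indicator_def)
    moreover have "(\<lambda>p. if 0 \<le> snd p \<and> snd p < f (fst p) then 1 else 0 :: ennreal) \<in> borel_measurable (M \<Otimes>\<^sub>M lborel)"
      by measurable
    ultimately show "(\<lambda>(x, t). indicator {0..<f x} t :: ennreal) \<in> borel_measurable (M \<Otimes>\<^sub>M lborel)"
      by (simp add: case_prod_beta')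
  qed
  also have "\<dots> = (\<integral>\<^sup>+t\<in>{0..}. ennreal (1 - (\<Prod>i<B. 1 - exp (- (r i * t)))) \<partial>lborel)"
  proof (rule nn_integral_cong)
    fix t :: real
    show "(\<integral>\<^sup>+x. indicator {0..<f x} t \<partial>M) = ennreal (1 - (\<Prod>i<B. 1 - exp (- (r i * t)))) * indicator {0..} t"
    proof (cases "0 \<le> t")
      case True
      have "(\<integral>\<^sup>+x. indicator {0..<f x} t \<partial>M) = (\<integral>\<^sup>+x. indicator {x\<in>space M. t < f x} x \<partial>M)"
        using True by (intro nn_integral_cong) (auto simp: indicator_def)
      also have "\<dots> = emeasure M {x\<in>space M. t < f x}" by (rule nn_integral_indicator) measurable
      finally show ?thesis using True tail by simp
    qed simp
  qed
  finally have eq: "(\<integral>\<^sup>+x. ennreal (f x) \<partial>M) = (\<integral>\<^sup>+t\<in>{0..}. ennreal (1 - (\<Prod>i<B. 1 - exp (- (r i * t)))) \<partial>lborel)" .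
  have "integral\<^sup>L M f = enn2real (\<integral>\<^sup>+x. ennreal (f x) \<partial>M)"
    by (rule integral_eq_nn_integral[OF fm AE0])
  then show ?thesis using eq unfolding M_def f_def[abs_def] Mi_def[abs_def] by simp
qed

lemma expected_T_repr:
  fixes N B :: nat and lam :: real and Nv :: "nat \<Rightarrow> nat"
  assumes B: "0 < B" and lam: "0 < lam" and Nv: "Nv \<in> assignments N B"
  shows "expected_T lam B Nv = enn2real (\<integral>\<^sup>+t\<in>{0..}. ennreal (1 - (\<Prod>i<B. 1 - exp (- (real (Nv i) * lam * t)))) \<partial>lborel)"
    and "(\<integral>\<^sup>+t\<in>{0..}. ennreal (1 - (\<Prod>i<B. 1 - exp (- (real (Nv i) * lam * t)))) \<partial>lborel) < \<infinity>"
proof -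
  define r where "r i = (if i < B then real (Nv i) * lam else 1)" for i
  have pos: "0 < Nv i" if "i < B" for i using Nv that by (simp add: assignments_def)
  have r: "0 < r i" for i using pos lam by (simp add: r_def)
  have rl: "lam \<le> r i" if "i < B" for i
    using pos[OF that] lam that by (simp add: r_def)
  have law: "service_law lam B Nv = PiM {..<B} (\<lambda>i. density lborel (exponential_density (r i)))"
    unfolding service_law_def by (rule PiM_cong) (auto simp: r_def)
  have pr: "(\<Prod>i<B. 1 - exp (- (r i * t))) = (\<Prod>i<B. 1 - exp (- (real (Nv i) * lam * t)))" for t
    by (rule prod.cong) (auto simp: r_def)
  show "expected_T lam B Nv = enn2real (\<integral>\<^sup>+t\<in>{0..}. ennreal (1 - (\<Prod>i<B. 1 - exp (- (real (Nv i) * lam * t)))) \<partial>lborel)"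
    unfolding expected_T_def law layer[OF B r] pr ..
  have "(\<integral>\<^sup>+t\<in>{0..}. ennreal (1 - (\<Prod>i<B. 1 - exp (- (r i * t)))) \<partial>lborel)
      \<le> (\<integral>\<^sup>+t\<in>{0..}. ennreal (real B * exp (- (lam * t))) \<partial>lborel)"
  proof (rule nn_integral_mono)
    fix t :: real
    show "ennreal (1 - (\<Prod>i<B. 1 - exp (- (r i * t)))) * indicator {0..} t
        \<le> ennreal (real B * exp (- (lam * t))) * indicator {0..} t"
    proof (cases "0 \<le> t")
      case True
      have rt: "0 \<le> r i * t" for i using r[of i] True by simp
      have "1 - (\<Prod>i<B. 1 - exp (- (r i * t))) \<le> (\<Sum>i<B. exp (- (r i * t)))"
        using one_minus_prod_le_sum[of "{..<B}" "\<lambda>i. exp (- (r i * t))"] rt by simp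
      also have "\<dots> \<le> (\<Sum>i<B. exp (- (lam * t)))"
        using rl True by (intro sum_mono) (simp add: mult_right_mono)
      also have "\<dots> = real B * exp (- (lam * t))" by simp
      finally show ?thesis using True by (simp add: ennreal_leI)
    qed simp
  qed
  also have "\<dots> = ennreal (real B / lam)" using lam by (intro nn_integral_expo) auto
  finally show "(\<integral>\<^sup>+t\<in>{0..}. ennreal (1 - (\<Prod>i<B. 1 - exp (- (real (Nv i) * lam * t)))) \<partial>lborel) < \<infinity>"
    unfolding pr[symmetric] using le_less_trans by fastforce
qed

theorem proposition3:
  fixes N B :: nat and lam :: real
  assumes "0 < N" and "0 < B" and "B dvd N" and "0 < lam"
  shows "(INF Nv\<in>assignments N B. expected_T lam B Nv) = real B / (real N * lam) * harm B
    \<and> (\<lambda>i. if i < B then N div B else 0) \<in> assignments N B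
    \<and> expected_T lam B (\<lambda>i. if i < B then N div B else 0) = real B / (real N * lam) * harm B"
proof -
  note N = \<open>0 < N\<close> and B = \<open>0 < B\<close> and dvd = \<open>B dvd N\<close> and lam = \<open>0 < lam\<close>
  define c where "c = real N * lam / real B"
  have c: "0 < c" using N B lam by (simp add: c_def)
  have val: "harm B / c = real B / (real N * lam) * harm B" by (simp add: c_def)
  define Nb where "Nb = (\<lambda>i. if i < B then N div B else 0)"
  have q: "real (N div B) = real N / real B" using dvd by (simp add: real_of_nat_div)
  have qpos: "0 < N div B" using N B dvd by (auto simp: dvd_def)
  have memb: "Nb \<in> assignments N B"
    unfolding assignments_def Nb_def using qpos dvd by auto
  have bal: "(\<integral>\<^sup>+t\<in>{0..}. ennreal (1 - (1 - exp (- (c * t))) ^ B) \<partial>lborel) = ennreal (harm B / c)"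
    by (rule nn_integral_bal[OF c])
  have Eb: "expected_T lam B Nb = harm B / c"
  proof -
    have pb: "(\<Prod>i<B. 1 - exp (- (real (Nb i) * lam * t))) = (1 - exp (- (c * t))) ^ B" for t
    proof -
      have "(\<Prod>i<B. 1 - exp (- (real (Nb i) * lam * t))) = (\<Prod>i<B. 1 - exp (- (c * t)))"
        by (rule prod.cong) (auto simp: Nb_def q c_def)
      then show ?thesis by simp
    qed
    show ?thesis
      unfolding expected_T_repr(1)[OF B lam memb] pb bal using c by (simp add: harm_nonneg)
  qed
  have lower: "harm B / c \<le> expected_T lam B Nv" if Nv: "Nv \<in> assignments N B" for Nv
  proof -
    have "ennreal (harm B / c) \<le> (\<integral>\<^sup>+t\<in>{0..}. ennreal (1 - (\<Prod>i<B. 1 - exp (- (real (Nv i) * lam * t)))) \<partial>lborel)"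
      unfolding bal[symmetric]
    proof (rule nn_integral_mono)
      fix t :: real
      show "ennreal (1 - (1 - exp (- (c * t))) ^ B) * indicator {0..} t
          \<le> ennreal (1 - (\<Prod>i<B. 1 - exp (- (real (Nv i) * lam * t)))) * indicator {0..} t"
      proof (cases "0 \<le> t")
        case True
        have pos: "0 < Nv i" if "i < B" for i using Nv that by (simp add: assignments_def)
        have sumN: "(\<Sum>i<B. Nv i) = N" using Nv by (simp add: assignments_def)
        have "(\<Sum>i<B. real (Nv i) * lam) / real (card {..<B}) = c"
          by (simp add: c_def sum_distrib_right[symmetric] flip: of_nat_sum sumN)
        then have "(\<Prod>i<B. 1 - exp (- (real (Nv i) * lam * t))) \<le> (1 - exp (- (c * t))) ^ B"
          using prod_le_mean_pow[of "{..<B}" "\<lambda>i. real (Nv i) * lam" t] B pos lam True by (simp add: lessThan_empty_iff)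
        then show ?thesis using True by (simp add: ennreal_leI)
      qed simp
    qed
    then have "enn2real (ennreal (harm B / c)) \<le> expected_T lam B Nv"
      unfolding expected_T_repr(1)[OF B lam Nv]
      by (rule enn2real_mono) (use expected_T_repr(2)[OF B lam Nv] in simp)
    then show ?thesis using c by (simp add: harm_nonneg)
  qed
  have "(INF Nv\<in>assignments N B. expected_T lam B Nv) = harm B / c"
  proof (rule cInf_eq_minimum)
    show "harm B / c \<in> expected_T lam B ` assignments N B"
      using memb Eb by (metis image_eqI)
  qed (use lower in auto)
  then show ?thesis using memb Eb val by (simp add: Nb_def)
qed

end
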